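(* Let $k\ge1$ be an integer, $\rho\ne0$ real, $0\le q<1$, and $z$ a complex number. Then, as formal power series in $t$, $$(1+\rho t)^{z/\rho}\,{\rm Lif}_{k,q}\!\left(-\frac{\ln(1+\rho t)}{\rho}\right)=\sum_{n=0}^\infty \widehat c_{n,\rho,q}^{(k)}(z)\frac{t^n}{n!},$$ where $(1+\rho t)^{z/\rho}=\exp\!\big(\tfrac{z}{\rho}\ln(1+\rho t)\big)$.
   Context: For real $0\le q<1$ (with $0^0=1$), $[x]_q=\frac{1-q^x}{1-q}$. The $q$-polyfactorial function is ${\rm Lif}_{k,q}(w)=\sum_{n=0}^\infty\frac{w^n}{n!\,[n+1]_q^k}$. Jackson's $q$-integral: $\int_0^1 f(x)\,d_qx=(1-q)\sum_{j\ge0} f(q^j)q^j$; multiple integrals are iterated. $(x)_n=x(x-1)\cdots(x-n+1)$, $(x)_0=1$. The $q$-poly-Cauchy polynomials of the second kind with parameter $\rho$ are $\widehat c_{n,\rho,q}^{(k)}(z)=\rho^n\int_0^1\cdots\int_0^1\left(\frac{-x_1\cdots x_k+z}{\rho}\right)_n d_qx_1\cdots d_qx_k$ ($k$-fold). *)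

theory Defs
  imports "HOL-Analysis.Analysis" "HOL-Computational_Algebra.Formal_Power_Series"
begin

definition qnum :: "real \<Rightarrow> nat \<Rightarrow> real" where
  "qnum q x = (1 - q ^ x) / (1 - q)"

definition falling :: "complex \<Rightarrow> nat \<Rightarrow> complex" where
  "falling x n = (\<Prod>i<n. x - of_nat i)"

definition jackson_int :: "real \<Rightarrow> (real \<Rightarrow> complex) \<Rightarrow> complex" where
  "jackson_int q f = of_real (1 - q) * (\<Sum>j. f (q ^ j) * of_real (q ^ j))"

text \<open>k-fold iterated Jackson integral; the integrand takes the list [x_1,...,x_k]
  (innermost integration variable x_1 is the head of the list, iterated as written
   d_q x_1 ... d_q x_k).\<close>
fun jackson_multi :: "real \<Rightarrow> nat \<Rightarrow> (real list \<Rightarrow> complex) \<Rightarrow> complex" where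
  "jackson_multi q 0 F = F []"
| "jackson_multi q (Suc k) F = jackson_int q (\<lambda>x. jackson_multi q k (\<lambda>xs. F (xs @ [x])))"

definition qpoly_cauchy2 :: "nat \<Rightarrow> real \<Rightarrow> real \<Rightarrow> nat \<Rightarrow> complex \<Rightarrow> complex" where
  "qpoly_cauchy2 k \<rho> q n z =
     of_real (\<rho> ^ n) *
     jackson_multi q k (\<lambda>xs. falling ((- of_real (prod_list xs) + z) / of_real \<rho>) n)"

definition Lif_fps :: "nat \<Rightarrow> real \<Rightarrow> complex fps" where
  "Lif_fps k q = Abs_fps (\<lambda>n. 1 / (of_nat (fact n) * of_real (qnum q (Suc n) ^ k)))"

definition ln1p_fps :: "real \<Rightarrow> complex fps" where
  "ln1p_fps \<rho> = fps_ln 1 oo (fps_const (of_real \<rho>) * fps_X)"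

end

theory Submission
  imports Defs
begin

lemma qpow_lt1: assumes "0 \<le> q" "q < 1" shows "q ^ Suc m < (1::real)"
proof -
  have "q ^ Suc m \<le> q" using assms by (simp add: power_le_one mult_left_le)
  then show ?thesis using assms by linarith
qed

lemma qnum_nz: assumes "0 \<le> q" "q < 1" shows "qnum q (Suc m) \<noteq> 0"
  using qpow_lt1[OF assms, of m] assms by (simp add: qnum_def)

lemma jackson_int_poly:
  assumes "0 \<le> q" "q < 1" "finite S"
  shows "jackson_int q (\<lambda>x. \<Sum>m\<in>S. d m * of_real x ^ m)
       = (\<Sum>m\<in>S. d m / of_real (qnum q (Suc m)))"
proof -
  have s: "(\<lambda>j. \<Sum>m\<in>S. d m * of_real (q ^ Suc m) ^ j) sums (\<Sum>m\<in>S. d m * (1 / (1 - of_real (q ^ Suc m))))"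
  proof (rule sums_sum, rule sums_mult, rule geometric_sums)
    fix m
    have "norm (of_real (q ^ Suc m) :: complex) = q ^ Suc m"
      by (simp only: norm_of_real) (simp add: assms(1))
    then show "norm (of_real (q ^ Suc m) :: complex) < 1"
      using qpow_lt1[OF assms(1,2), of m] by linarith
  qed
  have t: "(q ^ j) ^ m * q ^ j = (q ^ Suc m) ^ j" for j m :: nat
  proof -
    have "(q ^ j) ^ m * q ^ j = (q ^ j) ^ Suc m" by (rule power_Suc2[symmetric])
    also have "\<dots> = (q ^ Suc m) ^ j" by (metis mult.commute power_mult)
    finally show ?thesis .
  qed
  have eq: "(\<lambda>j. (\<Sum>m\<in>S. d m * of_real (q ^ j) ^ m) * of_real (q ^ j))
          = (\<lambda>j. \<Sum>m\<in>S. d m * of_real (q ^ Suc m) ^ j)"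
  proof
    fix j
    have "(\<Sum>m\<in>S. d m * of_real (q ^ j) ^ m) * of_real (q ^ j)
        = (\<Sum>m\<in>S. d m * (of_real ((q ^ j) ^ m * q ^ j) :: complex))"
      by (simp add: sum_distrib_right mult.assoc)
    also have "\<dots> = (\<Sum>m\<in>S. d m * of_real (q ^ Suc m) ^ j)"
      by (simp only: t of_real_power)
    finally show "(\<Sum>m\<in>S. d m * of_real (q ^ j) ^ m) * of_real (q ^ j) = (\<Sum>m\<in>S. d m * of_real (q ^ Suc m) ^ j)" .
  qed
  have "jackson_int q (\<lambda>x. \<Sum>m\<in>S. d m * of_real x ^ m)
      = of_real (1 - q) * (\<Sum>m\<in>S. d m * (1 / (1 - of_real (q ^ Suc m))))"
    unfolding jackson_int_def eq using s by (simp add: sums_iff)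
  also have "\<dots> = (\<Sum>m\<in>S. d m / of_real (qnum q (Suc m)))"
    unfolding sum_distrib_left
  proof (rule sum.cong[OF refl])
    fix m
    have "1 - q ^ Suc m \<noteq> 0" using qpow_lt1[OF assms(1,2), of m] by linarith
    then have B: "(of_real (1 - q ^ Suc m) :: complex) \<noteq> 0" by (metis of_real_eq_0_iff)
    have A: "(of_real (1 - q) :: complex) \<noteq> 0" using assms by simp
    have e1: "(1 - of_real (q ^ Suc m) :: complex) = of_real (1 - q ^ Suc m)" by simp
    have e2: "(of_real (qnum q (Suc m)) :: complex) = of_real (1 - q ^ Suc m) / of_real (1 - q)"
      unfolding qnum_def by (rule of_real_divide)
    have gen: "\<And>a b c::complex. a \<noteq> 0 \<Longrightarrow> b \<noteq> 0 \<Longrightarrow> a * (c * (1 / b)) = c / (b / a)"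
      by (simp add: field_simps)
    show "of_real (1 - q) * (d m * (1 / (1 - of_real (q ^ Suc m)))) = d m / of_real (qnum q (Suc m))"
      unfolding e1 e2 by (rule gen[OF A B])
  qed
  finally show ?thesis .
qed

lemma jackson_multi_poly:
  assumes "0 \<le> q" "q < 1" "finite S"
  shows "jackson_multi q k (\<lambda>xs. \<Sum>m\<in>S. d m * of_real (prod_list xs) ^ m)
       = (\<Sum>m\<in>S. d m / of_real (qnum q (Suc m)) ^ k)"
proof (induction k arbitrary: d)
  case 0
  then show ?case by simp
next
  case (Suc k)
  have eq: "(\<lambda>x. jackson_multi q k (\<lambda>xs. \<Sum>m\<in>S. d m * of_real (prod_list (xs @ [x])) ^ m))
     = (\<lambda>x. \<Sum>m\<in>S. (d m / of_real (qnum q (Suc m)) ^ k) * of_real x ^ m)"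
  proof
    fix x
    have "(\<lambda>xs. \<Sum>m\<in>S. d m * of_real (prod_list (xs @ [x])) ^ m)
        = (\<lambda>xs. \<Sum>m\<in>S. (d m * of_real x ^ m) * of_real (prod_list xs) ^ m)"
      by (simp add: power_mult_distrib mult_ac)
    then show "jackson_multi q k (\<lambda>xs. \<Sum>m\<in>S. d m * of_real (prod_list (xs @ [x])) ^ m)
     = (\<Sum>m\<in>S. (d m / of_real (qnum q (Suc m)) ^ k) * of_real x ^ m)"
      using Suc.IH[of "\<lambda>m. d m * of_real x ^ m"] by (simp only: times_divide_eq_left)
  qed
  have "jackson_multi q (Suc k) (\<lambda>xs. \<Sum>m\<in>S. d m * of_real (prod_list xs) ^ m)
     = jackson_int q (\<lambda>x. jackson_multi q k (\<lambda>xs. \<Sum>m\<in>S. d m * of_real (prod_list (xs @ [x])) ^ m))"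
    by (simp only: jackson_multi.simps)
  also have "\<dots> = (\<Sum>m\<in>S. (d m / of_real (qnum q (Suc m)) ^ k) / of_real (qnum q (Suc m)))"
    by (simp only: eq jackson_int_poly[OF assms])
  finally show ?case by (simp only: power_Suc2 divide_divide_eq_left)
qed


lemma exp_lin:
  fixes G :: "complex fps"
  assumes G0: "fps_nth G 0 = 0"
  shows "fps_exp 1 oo (fps_const c * G) = fps_exp c oo G"
proof -
  have "fps_exp c oo G = (fps_exp 1 oo (fps_const c * fps_X)) oo G"
    by simp
  also have "\<dots> = fps_exp 1 oo ((fps_const c * fps_X) oo G)"
    by (rule fps_compose_assoc[symmetric]) (simp_all add: G0)
  also have "(fps_const c * fps_X) oo G = fps_const c * G"
    using G0 by (simp flip: fps_const_mult_apply_left)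
  finally show ?thesis by simp
qed

lemma exp_ln_binom: "fps_exp w oo fps_ln 1 = fps_binomial (w::complex)"
proof -
  let ?E = "fps_exp w oo fps_ln 1"
  have "fps_deriv ?E = ((fps_const w * fps_exp w) oo fps_ln 1) * (fps_const 1 * inverse (1 + fps_X))"
    by (simp add: fps_compose_deriv fps_ln_deriv)
  also have "\<dots> = fps_const w * ?E * inverse (1 + fps_X)"
    by (simp flip: fps_const_mult_apply_left)
  also have "\<dots> = fps_const w * ?E / (1 + fps_X)"
    by (rule fps_divide_unit[symmetric]) simp
  finally have d: "fps_deriv ?E = fps_const w * ?E / (1 + fps_X)" .
  have "fps_nth ?E 0 = 1" by (simp add: fps_compose_nth)
  with d show ?thesis using fps_binomial_ODE_unique' by blast
qed


lemma L0: "fps_nth (ln1p_fps \<rho>) 0 = 0"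
  by (simp add: ln1p_fps_def fps_compose_nth)

lemma exp_L_nth: "fps_nth (fps_exp w oo ln1p_fps \<rho>) n = of_real \<rho> ^ n * (w gchoose n)"
proof -
  have "fps_exp w oo ln1p_fps \<rho> = (fps_exp w oo fps_ln 1) oo (fps_const (of_real \<rho>) * fps_X)"
    unfolding ln1p_fps_def by (rule fps_compose_assoc) simp_all
  then show ?thesis by (simp add: exp_ln_binom)
qed

lemma compose_nth_ext:
  fixes f B :: "complex fps"
  assumes B0: "fps_nth B 0 = 0" and jn: "j \<le> n"
  shows "fps_nth (f oo B) j = (\<Sum>i=0..n. fps_nth f i * fps_nth (B ^ i) j)"
proof -
  have z: "\<And>i. j < i \<Longrightarrow> fps_nth (B ^ i) j = 0" using startsby_zero_power_prefix[OF B0] by blast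
  show ?thesis unfolding fps_compose_nth
    by (rule sum.mono_neutral_left) (use jn z in auto)
qed

lemma mult_compose_nth:
  fixes a f B :: "complex fps"
  assumes B0: "fps_nth B 0 = 0"
  shows "fps_nth (a * (f oo B)) n = (\<Sum>m=0..n. fps_nth f m * fps_nth (a * B ^ m) n)"
proof -
  have "fps_nth (a * (f oo B)) n = (\<Sum>i=0..n. fps_nth a i * (\<Sum>m=0..n. fps_nth f m * fps_nth (B ^ m) (n - i)))"
    unfolding fps_mult_nth by (rule sum.cong[OF refl]) (simp add: compose_nth_ext[OF B0])
  also have "\<dots> = (\<Sum>m=0..n. \<Sum>i=0..n. fps_nth f m * (fps_nth a i * fps_nth (B ^ m) (n - i)))"
  proof -
    have inner: "\<And>i. fps_nth a i * (\<Sum>m=0..n. fps_nth f m * fps_nth (B ^ m) (n - i))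
       = (\<Sum>m=0..n. fps_nth f m * (fps_nth a i * fps_nth (B ^ m) (n - i)))"
      by (simp add: sum_distrib_left mult.left_commute)
    show ?thesis unfolding inner by (rule sum.swap)
  qed
  also have "\<dots> = (\<Sum>m=0..n. fps_nth f m * fps_nth (a * B ^ m) n)"
    by (simp only: fps_mult_nth sum_distrib_left)
  finally show ?thesis .
qed


lemma key:
  fixes x z :: complex and \<rho> :: real
  defines "r \<equiv> (of_real \<rho> :: complex)"
  defines "L \<equiv> ln1p_fps \<rho>"
  defines "B \<equiv> fps_const (- 1 / r) * L"
  defines "a \<equiv> fps_exp (z / r) oo L"
  assumes r0: "\<rho> \<noteq> 0"
  shows "r ^ n * (((- x + z) / r) gchoose n)
       = (\<Sum>m=0..n. fps_nth (a * B ^ m) n / of_nat (fact m) * x ^ m)"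
proof -
  have rnz: "r \<noteq> 0" using r0 by (simp add: r_def)
  have L0': "fps_nth L 0 = 0" by (simp add: L_def L0)
  have B0: "fps_nth B 0 = 0" by (simp add: B_def L0')
  have s: "(- x + z) / r = z / r + (- x / r)" by (simp add: add_divide_distrib diff_divide_distrib)
  have c: "fps_const (- x / r) * L = fps_const x * B"
    by (simp add: B_def mult.assoc[symmetric] fps_const_mult)
  have "fps_exp ((- x + z) / r) oo L = (fps_exp (z / r) * fps_exp (- x / r)) oo L"
    by (simp only: s fps_exp_add_mult)
  also have "\<dots> = a * (fps_exp (- x / r) oo L)"
    by (simp only: fps_compose_mult_distrib[OF L0'] a_def)
  also have "fps_exp (- x / r) oo L = fps_exp x oo B"
    using exp_lin[OF L0', of "- x / r"] exp_lin[OF B0, of x] c by simp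
  finally have e: "fps_exp ((- x + z) / r) oo L = a * (fps_exp x oo B)" .
  have "r ^ n * (((- x + z) / r) gchoose n) = fps_nth (fps_exp ((- x + z) / r) oo L) n"
    by (simp add: L_def r_def exp_L_nth)
  also have "\<dots> = (\<Sum>m=0..n. fps_nth (fps_exp x) m * fps_nth (a * B ^ m) n)"
    unfolding e by (rule mult_compose_nth[OF B0])
  also have "\<dots> = (\<Sum>m=0..n. fps_nth (a * B ^ m) n / of_nat (fact m) * x ^ m)"
    by (rule sum.cong[OF refl]) simp
  finally show ?thesis .
qed


theorem theorem5:
  fixes k :: nat and \<rho> q :: real and z :: complex
  assumes "k \<ge> 1" and "\<rho> \<noteq> 0" and "0 \<le> q" and "q < 1"
  shows "(fps_exp 1 oo (fps_const (z / of_real \<rho>) * ln1p_fps \<rho>))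
           * (Lif_fps k q oo (fps_const (- 1 / of_real \<rho>) * ln1p_fps \<rho>))
         = Abs_fps (\<lambda>n. qpoly_cauchy2 k \<rho> q n z / of_nat (fact n))"
proof (rule fps_ext)
  fix n
  define r where "r = (of_real \<rho> :: complex)"
  define L where "L = ln1p_fps \<rho>"
  define B where "B = fps_const (- 1 / r) * L"
  define a where "a = fps_exp (z / r) oo L"
  define c where "c = (\<lambda>m. fps_nth (a * B ^ m) n / of_nat (fact m))"
  define Q where "Q = (\<lambda>m. (of_real (qnum q (Suc m)) :: complex) ^ k)"
  have rnz: "r \<noteq> 0" using assms(2) by (simp add: r_def)
  have L0': "fps_nth L 0 = 0" by (simp add: L_def L0)
  have B0: "fps_nth B 0 = 0" by (simp add: B_def L0')
  have lhs: "(fps_exp 1 oo (fps_const (z / of_real \<rho>) * ln1p_fps \<rho>))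
           * (Lif_fps k q oo (fps_const (- 1 / of_real \<rho>) * ln1p_fps \<rho>)) = a * (Lif_fps k q oo B)"
    using exp_lin[OF L0', of "z / r"] by (simp add: a_def B_def L_def r_def)
  have "fps_nth (a * (Lif_fps k q oo B)) n = (\<Sum>m=0..n. fps_nth (Lif_fps k q) m * fps_nth (a * B ^ m) n)"
    by (rule mult_compose_nth[OF B0])
  also have "\<dots> = (\<Sum>m=0..n. c m / Q m)"
    by (rule sum.cong[OF refl]) (simp add: Lif_fps_def c_def Q_def)
  finally have l: "fps_nth (a * (Lif_fps k q oo B)) n = (\<Sum>m=0..n. c m / Q m)" .
  have fe: "falling ((- of_real (prod_list xs) + z) / r) n
      = (\<Sum>m=0..n. (of_nat (fact n) / r ^ n * c m) * of_real (prod_list xs) ^ m)" for xs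
  proof -
    have "falling ((- of_real (prod_list xs) + z) / r) n
        = of_nat (fact n) * (((- of_real (prod_list xs) + z) / r) gchoose n)"
      by (simp add: falling_def gbinomial_mult_fact lessThan_atLeast0)
    also have "\<dots> = of_nat (fact n) / r ^ n * (r ^ n * (((- of_real (prod_list xs) + z) / r) gchoose n))"
      using rnz by simp
    also have "\<dots> = of_nat (fact n) / r ^ n * (\<Sum>m=0..n. c m * of_real (prod_list xs) ^ m)"
      using key[OF assms(2), where x="of_real (prod_list xs)" and z=z and n=n]
      by (simp add: c_def a_def B_def L_def r_def)
    finally show ?thesis by (simp add: sum_distrib_left mult.assoc)
  qed
  have "qpoly_cauchy2 k \<rho> q n z = r ^ n *
      jackson_multi q k (\<lambda>xs. \<Sum>m=0..n. (of_nat (fact n) / r ^ n * c m) * of_real (prod_list xs) ^ m)"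
    unfolding qpoly_cauchy2_def fe[symmetric] by (simp add: r_def)
  also have "\<dots> = r ^ n * (\<Sum>m=0..n. (of_nat (fact n) / r ^ n * c m) / Q m)"
    by (simp only: jackson_multi_poly[OF assms(3,4) finite_atLeastAtMost] Q_def)
  also have "\<dots> = of_nat (fact n) * (\<Sum>m=0..n. c m / Q m)"
    using rnz by (simp add: sum_distrib_left)
  finally have r: "qpoly_cauchy2 k \<rho> q n z / of_nat (fact n) = (\<Sum>m=0..n. c m / Q m)"
    by simp
  show "fps_nth ((fps_exp 1 oo (fps_const (z / of_real \<rho>) * ln1p_fps \<rho>))
           * (Lif_fps k q oo (fps_const (- 1 / of_real \<rho>) * ln1p_fps \<rho>))) n
       = fps_nth (Abs_fps (\<lambda>n. qpoly_cauchy2 k \<rho> q n z / of_nat (fact n))) n"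
    unfolding lhs l using r by simp
qed

end
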